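(* Let $E$ and $E^c=\partial\overline{\mathcal{G}}\setminus E$ be nonempty clopen subsets of $\partial\overline{\mathcal{G}}$. Let $f:\overline{\mathcal{G}}\to\mathbb{R}$ be harmonic with $f=C\ge 0$ on $E$ and $f>C$ on $E^c$. Let $\epsilon>0$, and let $t_1,t_2$ be regular values of $f$ with: - $C<t_2<t_1<\min_{x\in E^c}f(x)$; - $d(x,E)<\epsilon$ whenever $f(x)\le t_i$, for $i=1,2$. Let $\mathcal{G}_2=f^{-1}([t_2,t_1])\cap\mathcal{G}$, regarded as a graph after subdividing edges at the (finitely many, interior to edges) points of $f^{-1}(t_1)\cup f^{-1}(t_2)$. Then $\mathcal{G}_2$ is a finite graph containing no boundary vertices of $\mathcal{G}$, and $$\sum_{v\in f^{-1}(t_1)}\partial_\nu f(v)=\sum_{v\in f^{-1}(t_2)}\partial_\nu f(v),$$ where for $v\in f^{-1}(t_i)$ the quantity $\partial_\nu f(v)$ is the derivative of $f$ at $v$ along the edge of $\mathcal{G}_{t_i}=\{f\ge t_i\}$ incident on $v$, in the direction pointing from $v$ into that edge (i.e. $v$ is regarded as a boundary vertex of $\mathcal{G}_{t_i}$).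
   Context: $\mathcal{G}$ is a connected, locally finite metric graph with countable vertex set and countable edge set. Each edge has a positive length and is identified with an interval. $\mathcal{G}$ carries the geodesic distance $d$, and $\overline{\mathcal{G}}$ is its metric completion. A designated set of vertices, containing all vertices of degree $1$, forms the boundary vertices. $\mathcal{G}_{int}$ is $\mathcal{G}$ minus the boundary vertices, and $\partial\overline{\mathcal{G}}=\overline{\mathcal{G}}\setminus\mathcal{G}_{int}$. Standing assumptions: $\overline{\mathcal{G}}$ is compact and $\partial\overline{\mathcal{G}}$ is totally disconnected. Clopen means open and closed in $\partial\overline{\mathcal{G}}$. A function $f:\overline{\mathcal{G}}\to\mathbb{R}$ is harmonic if it is continuous, linear on each edge, and satisfies $\sum_{e\sim v}\partial_\nu f_e(v)=0$ at every interior vertex $v$, where $\partial_\nu f_e(v)$ is the derivative of $f_e$ at $v$ in the direction from $v$ into the edge $e$. A point $x\in\mathcal{G}$ is a critical point of $f$ if $x$ is a vertex or $f'(x)=0$. A number is a critical value if its preimage contains a critical point. Values in the range of $f$ that are not critical values are regular values. *)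

theory Defs
  imports "HOL-Analysis.Analysis" "HOL-Library.Countable"
begin

text \<open>
  Vertices are all elements of a countable type 'v, edges all
  elements of a countable type 'e. Edge e goes from src e to tgt e and has length
  len e > 0; it is identified with the interval [0, len e], where parameter 0 is
  src e and parameter len e is tgt e.
\<close>

datatype ('v, 'e) gpoint = Vert 'v | EPt 'e real

definition gpts :: "('e \<Rightarrow> real) \<Rightarrow> ('v, 'e) gpoint set" where
  "gpts len = range Vert \<union> {EPt e s | e s. 0 < s \<and> s < len e}"

definition ep :: "('e \<Rightarrow> 'v) \<Rightarrow> ('e \<Rightarrow> 'v) \<Rightarrow> ('e \<Rightarrow> real) \<Rightarrow> 'e \<Rightarrow> real \<Rightarrow> ('v, 'e) gpoint" where
  "ep src tgt len e s = (if s = 0 then Vert (src e) else if s = len e then Vert (tgt e) else EPt e s)"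

inductive gwalk :: "('e \<Rightarrow> 'v) \<Rightarrow> ('e \<Rightarrow> 'v) \<Rightarrow> ('e \<Rightarrow> real) \<Rightarrow>
    ('v, 'e) gpoint \<Rightarrow> ('v, 'e) gpoint \<Rightarrow> real \<Rightarrow> bool"
  for src tgt len where
  gwalk_refl: "gwalk src tgt len x x 0"
| gwalk_step: "\<lbrakk>0 \<le> a; a \<le> len e; 0 \<le> b; b \<le> len e;
     gwalk src tgt len (ep src tgt len e b) y c\<rbrakk>
     \<Longrightarrow> gwalk src tgt len (ep src tgt len e a) y (\<bar>a - b\<bar> + c)"

definition gdist :: "('e \<Rightarrow> 'v) \<Rightarrow> ('e \<Rightarrow> 'v) \<Rightarrow> ('e \<Rightarrow> real) \<Rightarrow>
    ('v, 'e) gpoint \<Rightarrow> ('v, 'e) gpoint \<Rightarrow> real" where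
  "gdist src tgt len x y = Inf {c. gwalk src tgt len x y c}"

text \<open>degree, counting a loop twice\<close>
definition degree :: "('e \<Rightarrow> 'v) \<Rightarrow> ('e \<Rightarrow> 'v) \<Rightarrow> 'v \<Rightarrow> nat" where
  "degree src tgt v = card {e. src e = v} + card {e. tgt e = v}"

text \<open>
  Standing setting: connected, locally finite metric graph with positive edge
  lengths, boundary vertex set B containing all degree-1 vertices, and a
  metric completion (\<iota>, 'c): 'c is a complete metric space, \<iota> is an isometric
  embedding of the graph (with geodesic distance) with dense image.
\<close>

definition G_int :: "('e \<Rightarrow> real) \<Rightarrow> 'v set \<Rightarrow> ('v, 'e) gpoint set" where
  "G_int len B = gpts len - Vert ` B"

definition bdry :: "('e \<Rightarrow> real) \<Rightarrow> 'v set \<Rightarrow> (('v, 'e) gpoint \<Rightarrow> 'c) \<Rightarrow> 'c set" where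
  "bdry len B \<iota> = UNIV - \<iota> ` G_int len B"

definition totally_disconnected :: "'a::topological_space set \<Rightarrow> bool" where
  "totally_disconnected S \<longleftrightarrow> (\<forall>T \<subseteq> S. connected T \<longrightarrow> (\<exists>a. T \<subseteq> {a}))"

definition metric_graph_setting ::
  "('e::countable \<Rightarrow> 'v::countable) \<Rightarrow> ('e \<Rightarrow> 'v) \<Rightarrow> ('e \<Rightarrow> real) \<Rightarrow> 'v set \<Rightarrow>
   (('v, 'e) gpoint \<Rightarrow> 'c::metric_space) \<Rightarrow> bool" where
  "metric_graph_setting src tgt len B \<iota> \<longleftrightarrow>
     (\<forall>e. 0 < len e)
   \<and> (\<forall>v. finite {e. src e = v} \<and> finite {e. tgt e = v})
   \<and> (\<forall>x\<in>gpts len. \<forall>y\<in>gpts len. \<exists>c. gwalk src tgt len x y c)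
   \<and> {v. degree src tgt v = 1} \<subseteq> B
   \<and> (\<forall>x\<in>gpts len. \<forall>y\<in>gpts len. dist (\<iota> x) (\<iota> y) = gdist src tgt len x y)
   \<and> closure (\<iota> ` gpts len) = UNIV
   \<and> complete (UNIV :: 'c set)
   \<and> compact (UNIV :: 'c set)
   \<and> totally_disconnected (bdry len B \<iota>)"

definition slope :: "('e \<Rightarrow> 'v) \<Rightarrow> ('e \<Rightarrow> 'v) \<Rightarrow> ('e \<Rightarrow> real) \<Rightarrow>
    (('v, 'e) gpoint \<Rightarrow> 'c) \<Rightarrow> ('c \<Rightarrow> real) \<Rightarrow> 'e \<Rightarrow> real" where
  "slope src tgt len \<iota> f e = (f (\<iota> (Vert (tgt e))) - f (\<iota> (Vert (src e)))) / len e"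

text \<open>harmonic: continuous, linear on each edge, Kirchhoff condition at interior
  vertices; the outward-into-edge derivative is +slope at the source end and
  -slope at the target end.\<close>
definition harmonic ::
  "('e \<Rightarrow> 'v) \<Rightarrow> ('e \<Rightarrow> 'v) \<Rightarrow> ('e \<Rightarrow> real) \<Rightarrow> 'v set \<Rightarrow>
   (('v, 'e) gpoint \<Rightarrow> 'c::metric_space) \<Rightarrow> ('c \<Rightarrow> real) \<Rightarrow> bool" where
  "harmonic src tgt len B \<iota> f \<longleftrightarrow>
     continuous_on UNIV f
   \<and> (\<forall>e. \<exists>a b. \<forall>s\<in>{0..len e}. f (\<iota> (ep src tgt len e s)) = a + b * s)
   \<and> (\<forall>v. v \<notin> B \<longrightarrow>
        (\<Sum>e\<in>{e. src e = v}. slope src tgt len \<iota> f e)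
      + (\<Sum>e\<in>{e. tgt e = v}. - slope src tgt len \<iota> f e) = 0)"

definition critical_point ::
  "('e \<Rightarrow> 'v) \<Rightarrow> ('e \<Rightarrow> 'v) \<Rightarrow> ('e \<Rightarrow> real) \<Rightarrow>
   (('v, 'e) gpoint \<Rightarrow> 'c) \<Rightarrow> ('c \<Rightarrow> real) \<Rightarrow> ('v, 'e) gpoint \<Rightarrow> bool" where
  "critical_point src tgt len \<iota> f x \<longleftrightarrow>
     x \<in> gpts len \<and>
     (case x of Vert v \<Rightarrow> True | EPt e s \<Rightarrow> slope src tgt len \<iota> f e = 0)"

definition regular_value ::
  "('e \<Rightarrow> 'v) \<Rightarrow> ('e \<Rightarrow> 'v) \<Rightarrow> ('e \<Rightarrow> real) \<Rightarrow>
   (('v, 'e) gpoint \<Rightarrow> 'c) \<Rightarrow> ('c \<Rightarrow> real) \<Rightarrow> real \<Rightarrow> bool" where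
  "regular_value src tgt len \<iota> f t \<longleftrightarrow>
     t \<in> range f \<and>
     \<not> (\<exists>x. critical_point src tgt len \<iota> f x \<and> f (\<iota> x) = t)"

definition level :: "('e \<Rightarrow> real) \<Rightarrow> (('v, 'e) gpoint \<Rightarrow> 'c) \<Rightarrow> ('c \<Rightarrow> real) \<Rightarrow> real \<Rightarrow> ('v, 'e) gpoint set" where
  "level len \<iota> f t = {x \<in> gpts len. f (\<iota> x) = t}"

text \<open>For a point x = EPt e s with f x = t: derivative of f at x along the edge
  of {f \<ge> t} incident on x, in the direction pointing from x into that edge.
  The direction is +1 (increasing parameter) if points just to the right lie in
  {f \<ge> t}, otherwise -1.\<close>
definition level_flux ::
  "('e \<Rightarrow> 'v) \<Rightarrow> ('e \<Rightarrow> 'v) \<Rightarrow> ('e \<Rightarrow> real) \<Rightarrow>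
   (('v, 'e) gpoint \<Rightarrow> 'c) \<Rightarrow> ('c \<Rightarrow> real) \<Rightarrow> real \<Rightarrow> ('v, 'e) gpoint \<Rightarrow> real" where
  "level_flux src tgt len \<iota> f t x =
     (case x of Vert v \<Rightarrow> 0
      | EPt e s \<Rightarrow>
          (if eventually (\<lambda>h. t \<le> f (\<iota> (ep src tgt len e (s + h)))) (at_right 0)
           then slope src tgt len \<iota> f e else - slope src tgt len \<iota> f e))"

end

theory Submission imports Defs begin

lemma ep_EPt:
  assumes "ep src tgt len e b = EPt e' s'"
  shows "e = e' \<and> b = s' \<and> b \<noteq> 0 \<and> b \<noteq> len e"
  using assms unfolding ep_def by (auto split: if_splits)

lemma ep_Vert:
  assumes "ep src tgt len e b = Vert w"
  shows "(b = 0 \<and> src e = w) \<or> (b = len e \<and> b \<noteq> 0 \<and> tgt e = w)"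
  using assms unfolding ep_def by (auto split: if_splits)

lemma ep_interior: "0 < s \<Longrightarrow> s < len e \<Longrightarrow> ep src tgt len e s = EPt e s"
  unfolding ep_def by auto

lemma gwalk_nonneg: "gwalk src tgt len x y c \<Longrightarrow> 0 \<le> c"
  by (induction rule: gwalk.induct) auto

lemma gwalk_Vert_inv:
  assumes "gwalk src tgt len x y c" "y = Vert v" "c < r"
    "\<And>e. src e = v \<or> tgt e = v \<Longrightarrow> r \<le> len e"
  shows "x = Vert v \<or> (\<exists>e s. 0 \<le> s \<and> s \<le> len e \<and> x = ep src tgt len e s \<and>
          ((src e = v \<and> s \<le> c) \<or> (tgt e = v \<and> len e - s \<le> c)))"
  using assms
proof (induction rule: gwalk.induct)
  case (gwalk_refl x)
  then show ?case by simp
next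
  case (gwalk_step a e b y c)
  have c0: "0 \<le> c" using gwalk_nonneg gwalk_step.hyps(5) .
  have "c < r" using gwalk_step.prems(2) by simp
  then have IH: "ep src tgt len e b = Vert v \<or> (\<exists>e' s. 0 \<le> s \<and> s \<le> len e' \<and> ep src tgt len e b = ep src tgt len e' s \<and>
          ((src e' = v \<and> s \<le> c) \<or> (tgt e' = v \<and> len e' - s \<le> c)))"
    using gwalk_step by blast
  let ?z = "ep src tgt len e b"
  have fromV: ?case if "?z = Vert v"
  proof -
    from ep_Vert[OF that] show ?case
    proof
      assume h: "b = 0 \<and> src e = v"
      then show ?case using gwalk_step.hyps c0 by (intro disjI2 exI[of _ e] exI[of _ a]) auto
    next
      assume h: "b = len e \<and> b \<noteq> 0 \<and> tgt e = v"
      then show ?case using gwalk_step.hyps c0 by (intro disjI2 exI[of _ e] exI[of _ a]) auto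
    qed
  qed
  show ?case
  proof (cases "?z = Vert v")
    case True then show ?thesis by (rule fromV)
  next
    case False
    with IH obtain e' s where s: "0 \<le> s" "s \<le> len e'" "?z = ep src tgt len e' s"
      "(src e' = v \<and> s \<le> c) \<or> (tgt e' = v \<and> len e' - s \<le> c)" by blast
    have le': "r \<le> len e'" using s(4) gwalk_step.prems(3) by blast
    have "s \<noteq> 0 \<and> s \<noteq> len e'"
    proof
      show "s \<noteq> 0"
      proof
        assume "s = 0"
        then have "ep src tgt len e' s = Vert (src e')" by (simp add: ep_def)
        then have "?z = Vert (src e')" using s(3) by simp
        with s(4) False \<open>s = 0\<close> \<open>c < r\<close> le' show False by auto
      qed
      show "s \<noteq> len e'"
      proof
        assume "s = len e'"
        then have "ep src tgt len e' s = Vert (tgt e')" using \<open>s \<noteq> 0\<close> by (simp add: ep_def)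
        then have "?z = Vert (tgt e')" using s(3) by simp
        with s(4) False \<open>s = len e'\<close> \<open>c < r\<close> le' show False by auto
      qed
    qed
    then have "?z = EPt e' s" using s(1,2,3) by (simp add: ep_interior)
    from ep_EPt[OF this] have "e = e'" "b = s" by auto
    then show ?thesis using s gwalk_step.hyps(1,2)
      by (intro disjI2 exI[of _ e] exI[of _ a]) auto
  qed
qed

lemma gwalk_EPt_inv:
  assumes "gwalk src tgt len x y c" "y = EPt e0 s0" "c < s0" "c < len e0 - s0"
  shows "\<exists>s. 0 \<le> s \<and> s \<le> len e0 \<and> x = ep src tgt len e0 s \<and> \<bar>s - s0\<bar> \<le> c"
  using assms
proof (induction rule: gwalk.induct)
  case (gwalk_refl x)
  then show ?case by (intro exI[of _ s0]) (auto simp: ep_interior)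
next
  case (gwalk_step a e b y c)
  have c0: "0 \<le> c" using gwalk_nonneg gwalk_step.hyps(5) .
  then obtain s where s: "0 \<le> s" "s \<le> len e0" "ep src tgt len e b = ep src tgt len e0 s" "\<bar>s - s0\<bar> \<le> c"
    using gwalk_step by fastforce
  have "0 < s" "s < len e0" using s gwalk_step.prems by auto
  then have "ep src tgt len e b = EPt e0 s" using s(3) by (simp add: ep_interior)
  from ep_EPt[OF this] have "e = e0" "b = s" by auto
  then show ?case using s gwalk_step.hyps(1,2) by (intro exI[of _ a]) auto
qed


lemma gdist_walk:
  assumes setting: "metric_graph_setting src tgt len B \<iota>"
    and "x \<in> gpts len" "y \<in> gpts len" "gdist src tgt len x y < r"
  shows "\<exists>c<r. gwalk src tgt len x y c"
proof -
  have "{c. gwalk src tgt len x y c} \<noteq> {}" using setting assms(2,3)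
    unfolding metric_graph_setting_def by blast
  from cInf_lessD[OF this] assms(4) show ?thesis unfolding gdist_def by auto
qed

lemma vert_radius:
  assumes setting: "metric_graph_setting src tgt len B \<iota>"
  obtains r where "r > 0" "\<And>e. src e = v \<or> tgt e = v \<Longrightarrow> r \<le> len e"
proof -
  let ?F = "{e. src e = v} \<union> {e. tgt e = v}"
  have fin: "finite ?F" using setting unfolding metric_graph_setting_def by auto
  have pos: "\<forall>e. 0 < len e" using setting unfolding metric_graph_setting_def by auto
  define r where "r = (if ?F = {} then 1 else Min (len ` ?F))"
  have "r > 0" unfolding r_def using fin pos by auto
  moreover have "r \<le> len e" if "src e = v \<or> tgt e = v" for e
    unfolding r_def using fin that by (auto intro: Min_le)
  ultimately show ?thesis using that by blast
qed

lemma local_nbhd: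
  assumes setting: "metric_graph_setting src tgt len B \<iota>"
    and y: "y \<in> gpts len"
  shows "\<exists>r>0. \<exists>F. finite F \<and> (\<forall>x\<in>gpts len. gdist src tgt len x y < r \<longrightarrow>
           x = y \<or> (\<exists>e\<in>F. \<exists>s\<in>{0..len e}. x = ep src tgt len e s))"
proof (cases y)
  case (Vert v)
  obtain r where r: "r > 0" "\<And>e. src e = v \<or> tgt e = v \<Longrightarrow> r \<le> len e"
    using vert_radius[OF setting] by blast
  let ?F = "{e. src e = v} \<union> {e. tgt e = v}"
  have fin: "finite ?F" using setting unfolding metric_graph_setting_def by auto
  have "x = y \<or> (\<exists>e\<in>?F. \<exists>s\<in>{0..len e}. x = ep src tgt len e s)"
    if xh: "x \<in> gpts len" "gdist src tgt len x y < r" for x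
  proof -
    obtain c where c: "c < r" "gwalk src tgt len x y c"
      using gdist_walk[OF setting xh(1) y xh(2)] by blast
    have "x = Vert v \<or> (\<exists>e s. 0 \<le> s \<and> s \<le> len e \<and> x = ep src tgt len e s \<and>
          ((src e = v \<and> s \<le> c) \<or> (tgt e = v \<and> len e - s \<le> c)))"
      by (rule gwalk_Vert_inv[OF c(2) Vert c(1)]) (rule r(2))
    then show ?thesis
    proof
      assume "x = Vert v" then show ?thesis using Vert by simp
    next
      assume "\<exists>e s. 0 \<le> s \<and> s \<le> len e \<and> x = ep src tgt len e s \<and>
          ((src e = v \<and> s \<le> c) \<or> (tgt e = v \<and> len e - s \<le> c))"
      then obtain e s where "0 \<le> s" "s \<le> len e" "x = ep src tgt len e s" "src e = v \<or> tgt e = v"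
        by blast
      then show ?thesis by (intro disjI2 bexI[of _ e] bexI[of _ s]) auto
    qed
  qed
  then show ?thesis using r(1) fin by blast
next
  case (EPt e0 s0)
  have s0: "0 < s0" "s0 < len e0" using y EPt unfolding gpts_def by auto
  define r where "r = min s0 (len e0 - s0)"
  have "r > 0" using s0 r_def by auto
  have "x = y \<or> (\<exists>e\<in>{e0}. \<exists>s\<in>{0..len e}. x = ep src tgt len e s)"
    if xh: "x \<in> gpts len" "gdist src tgt len x y < r" for x
  proof -
    obtain c where c: "c < r" "gwalk src tgt len x y c"
      using gdist_walk[OF setting xh(1) y xh(2)] by blast
    from gwalk_EPt_inv[OF c(2) EPt] c(1) show ?thesis unfolding r_def by auto
  qed
  then show ?thesis using \<open>r > 0\<close> by blast
qed

lemma gdist_zero_Vert: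
  assumes setting: "metric_graph_setting src tgt len B \<iota>"
    and z: "z \<in> gpts len" and d: "gdist src tgt len z (Vert v) = 0"
  shows "z = Vert v"
proof (rule ccontr)
  assume ne: "z \<noteq> Vert v"
  obtain r where r: "r > 0" "\<And>e. src e = v \<or> tgt e = v \<Longrightarrow> r \<le> len e"
    using vert_radius[OF setting] by blast
  define r' where "r' = (case z of EPt e s \<Rightarrow> min r (min s (len e - s)) | Vert w \<Rightarrow> r)"
  have "r' > 0" using z r(1) unfolding r'_def gpts_def by (auto split: gpoint.splits)
  have vg: "Vert v \<in> gpts len" unfolding gpts_def by auto
  obtain c where c: "c < r'" "gwalk src tgt len z (Vert v) c"
    using gdist_walk[OF setting z vg] d \<open>r' > 0\<close> by auto
  have cr: "c < r" using c(1) unfolding r'_def by (auto split: gpoint.splits)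
  have "z = Vert v \<or> (\<exists>e s. 0 \<le> s \<and> s \<le> len e \<and> z = ep src tgt len e s \<and>
          ((src e = v \<and> s \<le> c) \<or> (tgt e = v \<and> len e - s \<le> c)))"
      by (rule gwalk_Vert_inv[OF c(2) refl cr]) (rule r(2))
  with ne obtain e s where es:
    "0 \<le> s" "s \<le> len e" "z = ep src tgt len e s"
    "(src e = v \<and> s \<le> c) \<or> (tgt e = v \<and> len e - s \<le> c)" by blast
  have lr: "r \<le> len e" using es(4) r(2) by blast
  show False
  proof (cases z)
    case (Vert w)
    from ep_Vert[of src tgt len e s w] es(3) Vert have
      "(s = 0 \<and> src e = w) \<or> (s = len e \<and> s \<noteq> 0 \<and> tgt e = w)" by simp
    then show False using es(4) ne Vert \<open>c < r\<close> lr by auto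
  next
    case (EPt e' s')
    from ep_EPt[of src tgt len e s e' s'] es(3) EPt have "e = e'" "s = s'" by auto
    then show False using es(4) c(1) EPt unfolding r'_def by auto
  qed
qed


lemma sign_facts:
  fixes a b m L :: real
  assumes "L > 0" "m * L = b - a"
  shows "(a < b \<longleftrightarrow> m > 0) \<and> (b < a \<longleftrightarrow> m < 0)"
proof -
  have 1: "0 < m * L \<longleftrightarrow> 0 < m" using assms(1) by (simp add: zero_less_mult_iff)
  have 2: "m * L < 0 \<longleftrightarrow> m < 0" using assms(1) by (simp add: mult_less_0_iff)
  show ?thesis using 1 2 assms(2) by linarith
qed

lemma alg_point:
  fixes a b m L t1 t2 :: real
  assumes "L > 0" "m * L = b - a" "t2 < t1" "a \<noteq> t1" "a \<noteq> t2" "b \<noteq> t1" "b \<noteq> t2"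
  shows "(if t2 < a \<and> a < t1 then m else 0) - (if t2 < b \<and> b < t1 then m else 0) =
    (if min a b < t1 \<and> t1 < max a b then \<bar>m\<bar> else 0) - (if min a b < t2 \<and> t2 < max a b then \<bar>m\<bar> else 0)"
proof -
  have s: "(a < b \<longleftrightarrow> m > 0) \<and> (b < a \<longleftrightarrow> m < 0)" by (rule sign_facts[OF assms(1,2)])
  show ?thesis
  proof (cases "a < b")
    case True then show ?thesis using s assms(3-7) by (auto simp: abs_if min_def max_def)
  next
    case False
    show ?thesis
    proof (cases "b < a")
      case True then show ?thesis using s assms(3-7) by (auto simp: abs_if min_def max_def)
    next
      case False then have "a = b" using \<open>\<not> a < b\<close> by auto
      then show ?thesis using s by auto
    qed
  qed
qed

lemma alg_solve:
  fixes a b m L t :: real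
  assumes "L > 0" "m * L = b - a" "min a b < t" "t < max a b"
  shows "m \<noteq> 0 \<and> 0 < (t - a) / m \<and> (t - a) / m < L \<and> a + m * ((t - a) / m) = t"
proof -
  have s: "(a < b \<longleftrightarrow> m > 0) \<and> (b < a \<longleftrightarrow> m < 0)" by (rule sign_facts[OF assms(1,2)])
  have mL: "m = (b - a) / L" using assms(1,2) by (simp add: field_simps)
  show ?thesis
  proof (cases "a < b")
    case True
    then have m: "m > 0" using s by auto
    have "(t - a) / m < L \<longleftrightarrow> t - a < L * m" using m by (simp add: divide_less_eq mult.commute)
    moreover have "L * m = b - a" using assms(2) by (simp add: mult.commute)
    ultimately show ?thesis using m True assms(3,4) by (auto simp: min_def max_def)
  next
    case False
    then have ba: "b < a" using assms(3,4) by (auto simp: min_def max_def split: if_splits)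
    then have m: "m < 0" using s by auto
    have "(t - a) / m < L \<longleftrightarrow> L * m < t - a" using m by (simp add: neg_divide_less_eq)
    moreover have "L * m = b - a" using assms(2) by (simp add: mult.commute)
    moreover have "0 < (t - a) / m" using m ba assms(3,4) by (auto simp: min_def max_def intro: divide_pos_neg divide_neg_neg)
    ultimately show ?thesis using m ba assms(3,4) by (auto simp: min_def max_def)
  qed
qed

lemma flux_eq:
  assumes s: "0 < s" "s < len e"
    and lin: "\<And>h. 0 < h \<Longrightarrow> h < len e - s \<Longrightarrow> f (\<iota> (ep src tgt len e (s + h))) = t + slope src tgt len \<iota> f e * h"
    and nz: "slope src tgt len \<iota> f e \<noteq> 0"
  shows "level_flux src tgt len \<iota> f t (EPt e s) = \<bar>slope src tgt len \<iota> f e\<bar>"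
proof -
  let ?m = "slope src tgt len \<iota> f e"
  let ?P = "\<lambda>h. t \<le> f (\<iota> (ep src tgt len e (s + h)))"
  show ?thesis
  proof (cases "?m > 0")
    case True
    have "eventually ?P (at_right 0)"
      unfolding eventually_at_right_field
      using s True by (intro exI[of _ "len e - s"]) (auto simp: lin)
    then show ?thesis using True by (simp add: level_flux_def)
  next
    case False
    then have m: "?m < 0" using nz by auto
    have "\<not> eventually ?P (at_right 0)"
    proof
      assume ev: "eventually ?P (at_right 0)"
      have ev2: "eventually (\<lambda>h. 0 < h \<and> h < len e - s) (at_right (0::real))"
        unfolding eventually_at_right_field using s by (intro exI[of _ "len e - s"]) auto
      obtain h where h: "?P h" "0 < h" "h < len e - s"
        using eventually_happens'[OF _ eventually_conj[OF ev ev2]] by auto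
      then have "t \<le> t + ?m * h" using lin by simp
      moreover have "?m * h < 0" using m h(2) by (rule mult_neg_pos)
      ultimately show False by linarith
    qed
    then show ?thesis using m by (simp add: level_flux_def)
  qed
qed

theorem lemma3p12:
  fixes src tgt :: "'e::countable \<Rightarrow> 'v::countable"
    and len :: "'e \<Rightarrow> real" and B :: "'v set"
    and \<iota> :: "('v, 'e) gpoint \<Rightarrow> 'c::metric_space"
    and f :: "'c \<Rightarrow> real" and E :: "'c set"
    and C \<epsilon> t1 t2 :: real
  assumes setting: "metric_graph_setting src tgt len B \<iota>"
    and E_sub: "E \<subseteq> bdry len B \<iota>"
    and E_open: "openin (top_of_set (bdry len B \<iota>)) E"
    and E_closed: "closedin (top_of_set (bdry len B \<iota>)) E"
    and E_ne: "E \<noteq> {}"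
    and Ec_ne: "bdry len B \<iota> - E \<noteq> {}"
    and harm: "harmonic src tgt len B \<iota> f"
    and C_nonneg: "C \<ge> 0"
    and f_E: "\<forall>x\<in>E. f x = C"
    and f_Ec: "\<forall>x\<in>bdry len B \<iota> - E. f x > C"
    and eps: "\<epsilon> > 0"
    and reg1: "regular_value src tgt len \<iota> f t1"
    and reg2: "regular_value src tgt len \<iota> f t2"
    and order: "C < t2" "t2 < t1" "t1 < Inf (f ` (bdry len B \<iota> - E))"
    and near1: "\<forall>x. f x \<le> t1 \<longrightarrow> infdist x E < \<epsilon>"
    and near2: "\<forall>x. f x \<le> t2 \<longrightarrow> infdist x E < \<epsilon>"
  shows "(let G2 = {x \<in> gpts len. t2 \<le> f (\<iota> x) \<and> f (\<iota> x) \<le> t1} in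
            finite (level len \<iota> f t1) \<and> finite (level len \<iota> f t2)
          \<and> (\<forall>x \<in> level len \<iota> f t1 \<union> level len \<iota> f t2. \<exists>e s. x = EPt e s)
          \<and> finite {v. Vert v \<in> G2}
          \<and> finite {e. \<exists>s\<in>{0..len e}. ep src tgt len e s \<in> G2}
          \<and> (\<forall>v\<in>B. Vert v \<notin> G2)
          \<and> (\<Sum>x\<in>level len \<iota> f t1. level_flux src tgt len \<iota> f t1 x)
            = (\<Sum>x\<in>level len \<iota> f t2. level_flux src tgt len \<iota> f t2 x))"
proof -
  note S = setting[unfolded metric_graph_setting_def]
  have pos: "\<And>e. 0 < len e" using S by auto
  have lf: "\<And>v. finite {e. src e = v}" "\<And>v. finite {e. tgt e = v}" using S by auto
  have iso: "\<And>x y. x \<in> gpts len \<Longrightarrow> y \<in> gpts len \<Longrightarrow> dist (\<iota> x) (\<iota> y) = gdist src tgt len x y"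
    using S by auto
  have cpt: "compact (UNIV :: 'c set)" using S by auto
  have fcont: "continuous_on UNIV f" using harm unfolding harmonic_def by auto
  have Vg: "\<And>v. (Vert v :: ('v, 'e) gpoint) \<in> gpts len" unfolding gpts_def by auto
  have EPtg: "\<And>e s. (EPt e s :: ('v, 'e) gpoint) \<in> gpts len \<longleftrightarrow> 0 < s \<and> s < len e" unfolding gpts_def by auto
  define fv where "fv v = f (\<iota> (Vert v))" for v
  define sl where "sl e = slope src tgt len \<iota> f e" for e
  have slL: "\<And>e. sl e * len e = fv (tgt e) - fv (src e)"
    unfolding sl_def slope_def fv_def using pos by (simp add: less_imp_neq[symmetric])
  have lin: "f (\<iota> (ep src tgt len e s)) = fv (src e) + sl e * s" if s: "s \<in> {0..len e}" for e s
  proof -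
    obtain a b where ab: "\<forall>s\<in>{0..len e}. f (\<iota> (ep src tgt len e s)) = a + b * s"
      using harm unfolding harmonic_def by blast
    have e0: "ep src tgt len e 0 = Vert (src e)" by (simp add: ep_def)
    have el: "ep src tgt len e (len e) = Vert (tgt e)" using pos[of e] by (simp add: ep_def)
    have fa: "fv (src e) = a" using ab[rule_format, of 0] e0 pos[of e] by (simp add: fv_def)
    have fb: "fv (tgt e) = a + b * len e" using ab[rule_format, of "len e"] el pos[of e] by (simp add: fv_def)
    have "sl e = b" using slL[of e] fa fb pos[of e] by (simp add: algebra_simps)
    then show ?thesis using ab s fa by auto
  qed
  have bddf: "bdd_below (f ` (bdry len B \<iota> - E))"
  proof -
    have "compact (f ` UNIV)" by (rule compact_continuous_image[OF fcont cpt])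
    then have "bdd_below (f ` UNIV)" by (intro bounded_imp_bdd_below compact_imp_bounded)
    then show ?thesis by (meson bdd_below_mono image_mono subset_UNIV)
  qed
  have bd_vals: "f p < t2 \<or> t1 < f p" if "p \<in> bdry len B \<iota>" for p
  proof (cases "p \<in> E")
    case True then show ?thesis using f_E order by auto
  next
    case False
    then have "Inf (f ` (bdry len B \<iota> - E)) \<le> f p" using that bddf by (intro cInf_lower) auto
    then show ?thesis using order by auto
  qed
  have noVert: "fv v \<noteq> t1" "fv v \<noteq> t2" for v
    using reg1 reg2 Vg[of v] unfolding regular_value_def critical_point_def fv_def by auto
  have noflat: "sl e \<noteq> 0" if "(EPt e s :: ('v, 'e) gpoint) \<in> gpts len" "f (\<iota> (EPt e s)) = t" "t = t1 \<or> t = t2" for e s t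
  proof
    assume "sl e = 0"
    then have cp: "critical_point src tgt len \<iota> f (EPt e s)"
      using that(1) unfolding critical_point_def sl_def by simp
    have "\<not> (\<exists>x. critical_point src tgt len \<iota> f x \<and> f (\<iota> x) = t)"
      using that(3) reg1 reg2 unfolding regular_value_def by blast
    then show False using cp that(2) by blast
  qed
  define K where "K = {x \<in> gpts len. t2 \<le> f (\<iota> x) \<and> f (\<iota> x) \<le> t1}"
  define Sc where "Sc = f -` {t2..t1}"
  have cS: "compact Sc"
  proof -
    have "closed Sc" unfolding Sc_def by (rule closed_vimage[OF closed_atLeastAtMost fcont])
    then have "compact (UNIV \<inter> Sc)" using cpt by blast
    then show ?thesis by simp
  qed
  have inG: "\<exists>y. y \<in> gpts len \<and> \<iota> y = p" if "p \<in> Sc" for p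
  proof -
    have "p \<notin> bdry len B \<iota>" using bd_vals[of p] that unfolding Sc_def by auto
    then show ?thesis unfolding bdry_def G_int_def by auto
  qed
  have "\<forall>p\<in>Sc. \<exists>q. fst q \<in> gpts len \<and> \<iota> (fst q) = p \<and> fst (snd q) > 0 \<and> finite (snd (snd q)) \<and>
     (\<forall>x\<in>gpts len. gdist src tgt len x (fst q) < fst (snd q) \<longrightarrow>
           x = fst q \<or> (\<exists>e\<in>snd (snd q). \<exists>s\<in>{0..len e}. x = ep src tgt len e s))"
  proof
    fix p assume "p \<in> Sc"
    then obtain y where y: "y \<in> gpts len" "\<iota> y = p" using inG by blast
    from local_nbhd[OF setting y(1)] obtain r F where "r > 0" "finite F"
      "\<forall>x\<in>gpts len. gdist src tgt len x y < r \<longrightarrow>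
           x = y \<or> (\<exists>e\<in>F. \<exists>s\<in>{0..len e}. x = ep src tgt len e s)" by blast
    then show "\<exists>q. fst q \<in> gpts len \<and> \<iota> (fst q) = p \<and> fst (snd q) > 0 \<and> finite (snd (snd q)) \<and>
     (\<forall>x\<in>gpts len. gdist src tgt len x (fst q) < fst (snd q) \<longrightarrow>
           x = fst q \<or> (\<exists>e\<in>snd (snd q). \<exists>s\<in>{0..len e}. x = ep src tgt len e s))"
      using y by (intro exI[of _ "(y, r, F)"]) auto
  qed
  then obtain q where q: "\<forall>p\<in>Sc. fst (q p) \<in> gpts len \<and> \<iota> (fst (q p)) = p \<and> fst (snd (q p)) > 0 \<and> finite (snd (snd (q p))) \<and>
     (\<forall>x\<in>gpts len. gdist src tgt len x (fst (q p)) < fst (snd (q p)) \<longrightarrow>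
           x = fst (q p) \<or> (\<exists>e\<in>snd (snd (q p)). \<exists>s\<in>{0..len e}. x = ep src tgt len e s))"
    by (rule bchoice[elim_format]) blast
  define yf where "yf p = fst (q p)" for p
  define rf where "rf p = fst (snd (q p))" for p
  define Ff where "Ff p = snd (snd (q p))" for p
  have Sc_cov: "Sc \<subseteq> (\<Union>p\<in>Sc. ball p (rf p))"
    using q unfolding rf_def by force
  obtain P where P: "P \<subseteq> Sc" "finite P" "Sc \<subseteq> (\<Union>p\<in>P. ball p (rf p))"
    using compactE_image[OF cS _ Sc_cov] by blast
  define Y where "Y = yf ` P"
  define FF where "FF = \<Union> (Ff ` P)"
  have finY: "finite Y" unfolding Y_def using P by simp
  have finFF: "finite FF" unfolding FF_def using P q Ff_def by auto
  have cover: "x \<in> Y \<or> (\<exists>e\<in>FF. \<exists>s\<in>{0..len e}. x = ep src tgt len e s)" if x: "x \<in> K" for x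
  proof -
    have "\<iota> x \<in> Sc" using x unfolding K_def Sc_def by auto
    then obtain p where p: "p \<in> P" "dist p (\<iota> x) < rf p" using P(3) by auto
    have pS: "p \<in> Sc" using p P by auto
    have xg: "x \<in> gpts len" using x K_def by auto
    have "gdist src tgt len x (yf p) < rf p"
      using iso[OF xg, of "yf p"] q pS p(2) unfolding yf_def rf_def by (simp add: dist_commute)
    then have "x = yf p \<or> (\<exists>e\<in>Ff p. \<exists>s\<in>{0..len e}. x = ep src tgt len e s)"
      using q pS xg unfolding yf_def rf_def Ff_def by blast
    then show ?thesis using p(1) unfolding Y_def FF_def by blast
  qed
  define VK where "VK = {v. Vert v \<in> K}"
  have VK_iff: "v \<in> VK \<longleftrightarrow> t2 < fv v \<and> fv v < t1" for v
    using noVert[of v] Vg[of v] unfolding VK_def K_def fv_def by auto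
  have finVK: "finite VK"
  proof -
    have "VK \<subseteq> Vert -` Y \<union> src ` FF \<union> tgt ` FF"
    proof
      fix v assume "v \<in> VK"
      then have "Vert v \<in> K" unfolding VK_def by simp
      from cover[OF this] show "v \<in> Vert -` Y \<union> src ` FF \<union> tgt ` FF"
      proof
        assume "Vert v \<in> Y" then show ?thesis by simp
      next
        assume "\<exists>e\<in>FF. \<exists>s\<in>{0..len e}. Vert v = ep src tgt len e s"
        then obtain e s where "e \<in> FF" "ep src tgt len e s = Vert v" by metis
        with ep_Vert[OF this(2)] show ?thesis by auto
      qed
    qed
    moreover have "finite (Vert -` Y)" using finY by (rule finite_vimageI) (simp add: inj_def)
    ultimately show ?thesis using finFF by (meson finite_UnI finite_imageI finite_subset)
  qed
  define epart :: "('v, 'e) gpoint \<Rightarrow> 'e" where "epart x = (case x of EPt e s \<Rightarrow> e | Vert v \<Rightarrow> undefined)" for x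
  define EK where "EK = {e. \<exists>s\<in>{0..len e}. ep src tgt len e s \<in> K}"
  have finEK: "finite EK"
  proof -
    have "EK \<subseteq> (\<Union>v\<in>VK. {e. src e = v}) \<union> (\<Union>v\<in>VK. {e. tgt e = v}) \<union> FF \<union> epart ` Y"
    proof
      fix e assume "e \<in> EK"
      then obtain s where s: "s \<in> {0..len e}" "ep src tgt len e s \<in> K" unfolding EK_def by blast
      show "e \<in> (\<Union>v\<in>VK. {e. src e = v}) \<union> (\<Union>v\<in>VK. {e. tgt e = v}) \<union> FF \<union> epart ` Y"
      proof (cases "s = 0 \<or> s = len e")
        case True
        then show ?thesis
        proof
          assume "s = 0"
          then have "Vert (src e) \<in> K" using s by (simp add: ep_def)
          then show ?thesis unfolding VK_def by blast
        next
          assume "s = len e"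
          then have "Vert (tgt e) \<in> K" using s pos[of e] by (simp add: ep_def)
          then show ?thesis unfolding VK_def by blast
        qed
      next
        case False
        then have ee: "ep src tgt len e s = EPt e s" using s(1) by (simp add: ep_def)
        from cover[OF s(2)] show ?thesis
        proof
          assume "ep src tgt len e s \<in> Y"
          then have "epart (EPt e s) \<in> epart ` Y" using ee by (metis image_eqI)
          then show ?thesis unfolding epart_def by simp
        next
          assume "\<exists>e'\<in>FF. \<exists>s'\<in>{0..len e'}. ep src tgt len e s = ep src tgt len e' s'"
          then obtain e' s' where "e' \<in> FF" "ep src tgt len e' s' = EPt e s" using ee by metis
          with ep_EPt[OF this(2)] show ?thesis by auto
        qed
      qed
    qed
    moreover have "finite ((\<Union>v\<in>VK. {e. src e = v}) \<union> (\<Union>v\<in>VK. {e. tgt e = v}) \<union> FF \<union> epart ` Y)"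
      using finVK lf finFF finY by auto
    ultimately show ?thesis by (rule finite_subset)
  qed
  have lev_K: "level len \<iota> f t \<subseteq> K" if "t = t1 \<or> t = t2" for t
    using that order unfolding level_def K_def by auto
  have lev_pt: "\<exists>e s. x = EPt e s \<and> 0 < s \<and> s < len e \<and> sl e \<noteq> 0 \<and> fv (src e) + sl e * s = t"
    if t: "t = t1 \<or> t = t2" and x: "x \<in> level len \<iota> f t" for t x
  proof (cases x)
    case (Vert v)
    then show ?thesis using x t noVert unfolding level_def fv_def by auto
  next
    case (EPt e s)
    have g: "(EPt e s :: ('v, 'e) gpoint) \<in> gpts len" "f (\<iota> (EPt e s)) = t" using x EPt unfolding level_def by auto
    then have s: "0 < s" "s < len e" using EPtg by auto
    have "f (\<iota> (ep src tgt len e s)) = fv (src e) + sl e * s" using lin s by auto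
    then have "fv (src e) + sl e * s = t" using g s by (simp add: ep_interior)
    then show ?thesis using EPt s noflat[OF g t] by auto
  qed
  have lev_inj: "inj_on epart (level len \<iota> f t)" if t: "t = t1 \<or> t = t2" for t
  proof
    fix x y assume xy: "x \<in> level len \<iota> f t" "y \<in> level len \<iota> f t" "epart x = epart y"
    obtain e s where es: "x = EPt e s" "sl e \<noteq> 0" "fv (src e) + sl e * s = t" using lev_pt[OF t xy(1)] by blast
    obtain e' s' where es': "y = EPt e' s'" "fv (src e') + sl e' * s' = t" using lev_pt[OF t xy(2)] by blast
    have "e = e'" using xy(3) es(1) es'(1) unfolding epart_def by simp
    then have "fv (src e) + sl e * s' = t" using es'(2) by simp
    then have "sl e * s = sl e * s'" using es(3) by linarith
    then have "s = s'" using es(2) by simp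
    then show "x = y" using es es' \<open>e = e'\<close> by simp
  qed
  define cr where "cr t e \<longleftrightarrow> min (fv (src e)) (fv (tgt e)) < t \<and> t < max (fv (src e)) (fv (tgt e))" for t e
  have lev_img: "epart ` level len \<iota> f t = {e \<in> EK. cr t e}" if t: "t = t1 \<or> t = t2" for t
  proof
    show "epart ` level len \<iota> f t \<subseteq> {e \<in> EK. cr t e}"
    proof
      fix e assume "e \<in> epart ` level len \<iota> f t"
      then obtain x where x: "x \<in> level len \<iota> f t" "e = epart x" by blast
      obtain e' s where es: "x = EPt e' s" "0 < s" "s < len e'" "sl e' \<noteq> 0" "fv (src e') + sl e' * s = t"
        using lev_pt[OF t x(1)] by blast
      have ee: "e = e'" using x(2) es(1) unfolding epart_def by simp
      have "EPt e s \<in> K" using lev_K[OF t] x(1) es(1) ee by auto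
      then have "e \<in> EK" unfolding EK_def using es(2,3) ee by (intro CollectI bexI[of _ s]) (auto simp: ep_interior)
      moreover have "cr t e"
      proof -
        have s: "(fv (src e) < fv (tgt e) \<longleftrightarrow> sl e > 0) \<and> (fv (tgt e) < fv (src e) \<longleftrightarrow> sl e < 0)"
          by (rule sign_facts[OF pos slL])
        have "0 < sl e * s \<longleftrightarrow> sl e > 0" using es(2) by (simp add: zero_less_mult_iff)
        moreover have "sl e * s < sl e * len e \<longleftrightarrow> sl e > 0" using es(3) ee
          by (auto simp: mult_less_cancel_left)
        moreover have "sl e * s < 0 \<longleftrightarrow> sl e < 0" using es(2) by (simp add: mult_less_0_iff)
        moreover have "sl e * len e < sl e * s \<longleftrightarrow> sl e < 0" using es(3) ee
          by (auto simp: mult_less_cancel_left)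
        ultimately show ?thesis unfolding cr_def using s es(4,5) ee slL[of e]
          by (auto simp: min_def max_def)
      qed
      ultimately show "e \<in> {e \<in> EK. cr t e}" by simp
    qed
  next
    show "{e \<in> EK. cr t e} \<subseteq> epart ` level len \<iota> f t"
    proof
      fix e assume e: "e \<in> {e \<in> EK. cr t e}"
      define s where "s = (t - fv (src e)) / sl e"
      have A: "sl e \<noteq> 0 \<and> 0 < s \<and> s < len e \<and> fv (src e) + sl e * s = t"
        unfolding s_def using alg_solve[OF pos slL] e unfolding cr_def by blast
      have "f (\<iota> (EPt e s)) = t" using lin[of s e] A by (simp add: ep_interior)
      then have "EPt e s \<in> level len \<iota> f t" unfolding level_def using A EPtg by auto
      moreover have "epart (EPt e s) = e" unfolding epart_def by simp
      ultimately show "e \<in> epart ` level len \<iota> f t" by (metis image_eqI)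
    qed
  qed
  have finlev: "finite (level len \<iota> f t)" if t: "t = t1 \<or> t = t2" for t
  proof -
    have "finite (epart ` level len \<iota> f t)" using lev_img[OF t] finEK by simp
    then show ?thesis using lev_inj[OF t] finite_imageD by blast
  qed
  have levsum: "(\<Sum>x\<in>level len \<iota> f t. level_flux src tgt len \<iota> f t x) = (\<Sum>e\<in>EK. if cr t e then \<bar>sl e\<bar> else 0)"
    if t: "t = t1 \<or> t = t2" for t
  proof -
    have "(\<Sum>x\<in>level len \<iota> f t. level_flux src tgt len \<iota> f t x) = (\<Sum>x\<in>level len \<iota> f t. \<bar>sl (epart x)\<bar>)"
    proof (rule sum.cong[OF refl])
      fix x assume x: "x \<in> level len \<iota> f t"
      obtain e s where es: "x = EPt e s" "0 < s" "s < len e" "sl e \<noteq> 0" "fv (src e) + sl e * s = t"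
        using lev_pt[OF t x] by blast
      have "level_flux src tgt len \<iota> f t (EPt e s) = \<bar>slope src tgt len \<iota> f e\<bar>"
      proof (rule flux_eq[where len=len and e=e and s=s and src=src and tgt=tgt and f=f and \<iota>=\<iota> and t=t, OF es(2,3)])
        fix h :: real assume h: "0 < h" "h < len e - s"
        have "f (\<iota> (ep src tgt len e (s + h))) = fv (src e) + sl e * (s + h)" using lin[of "s+h" e] h es by simp
        then show "f (\<iota> (ep src tgt len e (s + h))) = t + slope src tgt len \<iota> f e * h"
          using es(5) unfolding sl_def by (simp add: algebra_simps)
      next
        show "slope src tgt len \<iota> f e \<noteq> 0" using es(4) unfolding sl_def .
      qed
      then show "level_flux src tgt len \<iota> f t x = \<bar>sl (epart x)\<bar>" using es(1) unfolding sl_def epart_def by simp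
    qed
    also have "\<dots> = (\<Sum>e\<in>epart ` level len \<iota> f t. \<bar>sl e\<bar>)"
      using sum.reindex[OF lev_inj[OF t], of "\<lambda>e. \<bar>sl e\<bar>"] by simp
    also have "\<dots> = (\<Sum>e\<in>{e \<in> EK. cr t e}. \<bar>sl e\<bar>)" using lev_img[OF t] by simp
    also have "\<dots> = (\<Sum>e\<in>EK. if cr t e then \<bar>sl e\<bar> else 0)" using finEK by (rule sum.inter_filter)
    finally show ?thesis .
  qed
  have VK_B: "v \<notin> B" if "v \<in> VK" for v
  proof
    assume vB: "v \<in> B"
    have "\<iota> (Vert v) \<in> bdry len B \<iota>"
    proof (rule ccontr)
      assume "\<iota> (Vert v) \<notin> bdry len B \<iota>"
      then obtain z where z: "z \<in> G_int len B" "\<iota> z = \<iota> (Vert v)" unfolding bdry_def by auto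
      have zg: "z \<in> gpts len" using z unfolding G_int_def by auto
      have "gdist src tgt len z (Vert v) = 0" using iso[OF zg Vg[of v]] z(2) by simp
      then have "z = Vert v" by (rule gdist_zero_Vert[OF setting zg])
      then show False using z(1) vB unfolding G_int_def by auto
    qed
    then show False using bd_vals that VK_iff unfolding fv_def by fastforce
  qed
  have kirch: "(\<Sum>e\<in>EK. if src e \<in> VK then sl e else 0) - (\<Sum>e\<in>EK. if tgt e \<in> VK then sl e else 0) = 0"
  proof -
    have Es: "{e \<in> EK. src e = v} = {e. src e = v}" if "v \<in> VK" for v
      using that unfolding EK_def VK_def by (auto intro!: bexI[of _ 0] simp: ep_def less_imp_le[OF pos])
    have Et: "{e \<in> EK. tgt e = v} = {e. tgt e = v}" if "v \<in> VK" for v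
      using that pos unfolding EK_def VK_def
      by (auto intro!: bexI[of _ "len e" for e] simp: ep_def less_imp_le[OF pos] less_imp_neq[symmetric])
    have k: "(\<Sum>e\<in>{e. src e = v}. sl e) + (\<Sum>e\<in>{e. tgt e = v}. - sl e) = 0" if "v \<in> VK" for v
      using harm VK_B[OF that] unfolding harmonic_def sl_def by blast
    have "(\<Sum>e\<in>EK. if src e \<in> VK then sl e else 0) = (\<Sum>e\<in>{e\<in>EK. src e \<in> VK}. sl e)"
      using finEK by (rule sum.inter_filter[symmetric])
    also have "\<dots> = (\<Sum>v\<in>VK. \<Sum>e\<in>{e. e \<in> {e\<in>EK. src e \<in> VK} \<and> src e = v}. sl e)"
      using finEK finVK by (intro sum.group[symmetric]) auto
    also have "\<dots> = (\<Sum>v\<in>VK. \<Sum>e\<in>{e. src e = v}. sl e)"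
    proof (rule sum.cong[OF refl])
      fix v assume v: "v \<in> VK"
      have "{e. e \<in> {e\<in>EK. src e \<in> VK} \<and> src e = v} = {e \<in> EK. src e = v}" using v by blast
      then show "(\<Sum>e\<in>{e. e \<in> {e\<in>EK. src e \<in> VK} \<and> src e = v}. sl e) = (\<Sum>e\<in>{e. src e = v}. sl e)"
        using Es[OF v] by simp
    qed
    finally have 1: "(\<Sum>e\<in>EK. if src e \<in> VK then sl e else 0) = (\<Sum>v\<in>VK. \<Sum>e\<in>{e. src e = v}. sl e)" .
    have "(\<Sum>e\<in>EK. if tgt e \<in> VK then sl e else 0) = (\<Sum>e\<in>{e\<in>EK. tgt e \<in> VK}. sl e)"
      using finEK by (rule sum.inter_filter[symmetric])
    also have "\<dots> = (\<Sum>v\<in>VK. \<Sum>e\<in>{e. e \<in> {e\<in>EK. tgt e \<in> VK} \<and> tgt e = v}. sl e)"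
      using finEK finVK by (intro sum.group[symmetric]) auto
    also have "\<dots> = (\<Sum>v\<in>VK. \<Sum>e\<in>{e. tgt e = v}. sl e)"
    proof (rule sum.cong[OF refl])
      fix v assume v: "v \<in> VK"
      have "{e. e \<in> {e\<in>EK. tgt e \<in> VK} \<and> tgt e = v} = {e \<in> EK. tgt e = v}" using v by blast
      then show "(\<Sum>e\<in>{e. e \<in> {e\<in>EK. tgt e \<in> VK} \<and> tgt e = v}. sl e) = (\<Sum>e\<in>{e. tgt e = v}. sl e)"
        using Et[OF v] by simp
    qed
    finally have 2: "(\<Sum>e\<in>EK. if tgt e \<in> VK then sl e else 0) = (\<Sum>v\<in>VK. \<Sum>e\<in>{e. tgt e = v}. sl e)" .
    have "(\<Sum>v\<in>VK. \<Sum>e\<in>{e. src e = v}. sl e) - (\<Sum>v\<in>VK. \<Sum>e\<in>{e. tgt e = v}. sl e)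
        = (\<Sum>v\<in>VK. (\<Sum>e\<in>{e. src e = v}. sl e) + (\<Sum>e\<in>{e. tgt e = v}. - sl e))"
      by (simp add: sum_subtractf[symmetric] sum_negf)
    also have "\<dots> = 0" using k by simp
    finally show ?thesis using 1 2 by simp
  qed
  have pw: "(if src e \<in> VK then sl e else 0) - (if tgt e \<in> VK then sl e else 0)
      = (if cr t1 e then \<bar>sl e\<bar> else 0) - (if cr t2 e then \<bar>sl e\<bar> else 0)" for e
    unfolding VK_iff cr_def
    by (rule alg_point[OF pos slL order(2) noVert noVert])
  have "(\<Sum>e\<in>EK. if cr t1 e then \<bar>sl e\<bar> else 0) - (\<Sum>e\<in>EK. if cr t2 e then \<bar>sl e\<bar> else 0) = 0"
    using kirch pw by (simp add: sum_subtractf[symmetric])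
  then have sums: "(\<Sum>x\<in>level len \<iota> f t1. level_flux src tgt len \<iota> f t1 x)
            = (\<Sum>x\<in>level len \<iota> f t2. level_flux src tgt len \<iota> f t2 x)"
    using levsum[of t1] levsum[of t2] by simp
  have noV: "\<forall>x \<in> level len \<iota> f t1 \<union> level len \<iota> f t2. \<exists>e s. x = EPt e s"
    using lev_pt by blast
  have BK: "\<forall>v\<in>B. Vert v \<notin> K" using VK_B unfolding VK_def by blast
  show ?thesis unfolding Let_def K_def[symmetric] VK_def[symmetric] EK_def[symmetric]
    using finlev noV finVK finEK BK sums by auto
qed
end
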